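(* Let $G$ be a countable infinite graph whose maximum degree $\Delta(G)$ is finite. Then $G$ has a proper $k$-total difference labeling for some positive integer $k$ (so $\chi_{td}(G)$ is defined). Moreover, if $M$ is the largest element of a minimal well-spaced row with $\Delta(G)^2+1$ elements, then $\chi_{td}(G)\leq M$.
   Context: For a (possibly infinite) simple graph $G$ and a positive integer $k$, a proper $k$-total difference labeling of $G$ is a function $f: V(G)\to\{1,\dots,k\}$, extended to edges by $f(\{u,v\}) = |f(u)-f(v)|$, such that: (i) adjacent vertices receive different labels; (ii) two distinct edges sharing a vertex receive different labels; (iii) no edge receives the same label as either of its endpoints. $\chi_{td}(G)$ denotes the smallest $k$ for which such a labeling exists. A well-spaced row is a finite set of positive integers such that no element is twice another element and no three distinct elements form an arithmetic progression. A minimal well-spaced row with $m$ elements is a well-spaced row of cardinality $m$ whose maximum element is as small as possible among all well-spaced rows of cardinality $m$. *)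

theory Defs
  imports Main "HOL-Library.Countable_Set"
begin

definition simple_graph :: "'a set \<Rightarrow> ('a \<Rightarrow> 'a \<Rightarrow> bool) \<Rightarrow> bool" where
  "simple_graph V E \<longleftrightarrow>
     (\<forall>u v. E u v \<longrightarrow> u \<in> V \<and> v \<in> V) \<and>
     (\<forall>u v. E u v \<longrightarrow> E v u) \<and>
     (\<forall>v. \<not> E v v)"

definition nbrs :: "('a \<Rightarrow> 'a \<Rightarrow> bool) \<Rightarrow> 'a \<Rightarrow> 'a set" where
  "nbrs E v = {u. E v u}"

definition finite_max_degree :: "'a set \<Rightarrow> ('a \<Rightarrow> 'a \<Rightarrow> bool) \<Rightarrow> bool" where
  "finite_max_degree V E \<longleftrightarrow>
     (\<exists>D::nat. \<forall>v\<in>V. finite (nbrs E v) \<and> card (nbrs E v) \<le> D)"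

text \<open>Maximum degree (meaningful when finite_max_degree holds).\<close>
definition max_degree :: "'a set \<Rightarrow> ('a \<Rightarrow> 'a \<Rightarrow> bool) \<Rightarrow> nat" where
  "max_degree V E = Sup ((\<lambda>v. card (nbrs E v)) ` V)"

definition elab :: "('a \<Rightarrow> nat) \<Rightarrow> 'a \<Rightarrow> 'a \<Rightarrow> int" where
  "elab f u v = \<bar>int (f u) - int (f v)\<bar>"

definition proper_total_diff_labeling ::
  "'a set \<Rightarrow> ('a \<Rightarrow> 'a \<Rightarrow> bool) \<Rightarrow> nat \<Rightarrow> ('a \<Rightarrow> nat) \<Rightarrow> bool" where
  "proper_total_diff_labeling V E k f \<longleftrightarrow>
     (\<forall>v\<in>V. f v \<in> {1..k}) \<and>
     (\<forall>u v. E u v \<longrightarrow> f u \<noteq> f v) \<and>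
     (\<forall>v u w. E v u \<longrightarrow> E v w \<longrightarrow> u \<noteq> w \<longrightarrow> elab f v u \<noteq> elab f v w) \<and>
     (\<forall>u v. E u v \<longrightarrow> elab f u v \<noteq> int (f u) \<and> elab f u v \<noteq> int (f v))"

definition chi_td :: "'a set \<Rightarrow> ('a \<Rightarrow> 'a \<Rightarrow> bool) \<Rightarrow> nat" where
  "chi_td V E = (LEAST k. 0 < k \<and> (\<exists>f. proper_total_diff_labeling V E k f))"

definition well_spaced_row :: "nat set \<Rightarrow> bool" where
  "well_spaced_row S \<longleftrightarrow>
     finite S \<and> (\<forall>x\<in>S. 0 < x) \<and>
     (\<forall>x\<in>S. \<forall>y\<in>S. x \<noteq> 2 * y) \<and>
     (\<forall>a\<in>S. \<forall>b\<in>S. \<forall>c\<in>S. a \<noteq> b \<and> b \<noteq> c \<and> a \<noteq> c \<longrightarrow> a + c \<noteq> 2 * b)"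

definition minimal_well_spaced_row :: "nat set \<Rightarrow> nat \<Rightarrow> bool" where
  "minimal_well_spaced_row S m \<longleftrightarrow>
     well_spaced_row S \<and> card S = m \<and>
     (\<forall>T. well_spaced_row T \<and> card T = m \<longrightarrow> Max S \<le> Max T)"

end

theory Submission
  imports Defs
begin

fun build :: "(nat \<Rightarrow> nat \<Rightarrow> bool) \<Rightarrow> nat set \<Rightarrow> nat \<Rightarrow> nat list" where
  "build R S 0 = []"
| "build R S (Suc n) = build R S n @ [LEAST c. c \<in> S \<and> (\<forall>m<n. R m n \<longrightarrow> build R S n ! m \<noteq> c)]"

lemma build_len: "length (build R S n) = n"
  by (induction n) auto

lemma build_prefix: "m < n \<Longrightarrow> build R S n ! m = build R S (Suc m) ! m"
proof (induction n)
  case 0 then show ?case by simp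
next
  case (Suc n)
  show ?case
  proof (cases "m < n")
    case True
    then show ?thesis using Suc by (simp add: nth_append build_len)
  next
    case False
    then have "m = n" using Suc by simp
    then show ?thesis by simp
  qed
qed

lemma greedy:
  fixes R :: "nat \<Rightarrow> nat \<Rightarrow> bool" and S :: "nat set" and K :: nat
  assumes fin: "finite S" and cardS: "K < card S"
    and bound: "\<And>n. card {m. m < n \<and> R m n} \<le> K"
  shows "\<exists>g. \<forall>n. g n \<in> S \<and> (\<forall>m<n. R m n \<longrightarrow> g m \<noteq> g n)"
proof -
  define g where "g n = build R S (Suc n) ! n" for n
  have gdef: "g n = (LEAST c. c \<in> S \<and> (\<forall>m<n. R m n \<longrightarrow> g m \<noteq> c))" for n
  proof -
    have "g n = (LEAST c. c \<in> S \<and> (\<forall>m<n. R m n \<longrightarrow> build R S n ! m \<noteq> c))"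
      unfolding g_def by (simp add: nth_append build_len)
    also have "\<dots> = (LEAST c. c \<in> S \<and> (\<forall>m<n. R m n \<longrightarrow> g m \<noteq> c))"
    proof -
      have "\<forall>m<n. build R S n ! m = g m" unfolding g_def using build_prefix by blast
      then show ?thesis by (metis (no_types, lifting))
    qed
    finally show ?thesis .
  qed
  have ex: "\<exists>c. c \<in> S \<and> (\<forall>m<n. R m n \<longrightarrow> g m \<noteq> c)" for n
  proof -
    have "card (g ` {m. m < n \<and> R m n}) \<le> card {m. m < n \<and> R m n}"
      by (rule card_image_le) simp
    also have "\<dots> < card S" using bound[of n] cardS by simp
    finally have lt: "card (g ` {m. m < n \<and> R m n}) < card S" .
    have "\<not> S \<subseteq> g ` {m. m < n \<and> R m n}"
    proof
      assume "S \<subseteq> g ` {m. m < n \<and> R m n}"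
      then have "card S \<le> card (g ` {m. m < n \<and> R m n})" by (intro card_mono) auto
      then show False using lt by simp
    qed
    then show ?thesis by blast
  qed
  have "g n \<in> S \<and> (\<forall>m<n. R m n \<longrightarrow> g m \<noteq> g n)" for n
    using LeastI_ex[OF ex[of n]] gdef[of n] by simp
  then show ?thesis by blast
qed

definition close2 :: "('a \<Rightarrow> 'a \<Rightarrow> bool) \<Rightarrow> 'a \<Rightarrow> 'a \<Rightarrow> bool" where
  "close2 E u v \<longleftrightarrow> u \<noteq> v \<and> (E u v \<or> (\<exists>w. E u w \<and> E w v))"

lemma close2_sym:
  assumes "simple_graph V E" "close2 E u v" shows "close2 E v u"
  using assms unfolding close2_def simple_graph_def by blast

lemma deg_le:
  assumes "finite_max_degree V E" "v \<in> V"
  shows "finite (nbrs E v) \<and> card (nbrs E v) \<le> max_degree V E"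
proof -
  obtain D where D: "\<forall>v\<in>V. finite (nbrs E v) \<and> card (nbrs E v) \<le> D"
    using assms(1) unfolding finite_max_degree_def by blast
  have "bdd_above ((\<lambda>v. card (nbrs E v)) ` V)"
    using D by (auto simp: bdd_above_def)
  then have "card (nbrs E v) \<le> max_degree V E"
    unfolding max_degree_def using assms(2) by (simp add: cSup_upper)
  then show ?thesis using D assms(2) by blast
qed

lemma close2_card:
  assumes sg: "simple_graph V E" and fd: "finite_max_degree V E" and v: "v \<in> V"
  shows "finite {u. close2 E u v} \<and> card {u. close2 E u v} \<le> (max_degree V E)^2"
proof -
  let ?d = "max_degree V E"
  have sub: "{u. close2 E u v} \<subseteq> nbrs E v \<union> (\<Union>w\<in>nbrs E v. nbrs E w - {v})"
    using sg unfolding close2_def nbrs_def simple_graph_def by blast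
  have nv: "finite (nbrs E v)" "card (nbrs E v) \<le> ?d" using deg_le[OF fd v] by auto
  have wV: "w \<in> nbrs E v \<Longrightarrow> w \<in> V" for w using sg unfolding simple_graph_def nbrs_def by blast
  have nw: "w \<in> nbrs E v \<Longrightarrow> finite (nbrs E w - {v}) \<and> card (nbrs E w - {v}) \<le> ?d - 1" for w
  proof -
    assume w: "w \<in> nbrs E v"
    have "v \<in> nbrs E w" using w sg unfolding simple_graph_def nbrs_def by blast
    then show ?thesis using deg_le[OF fd wV[OF w]] by auto
  qed
  have finU: "finite (\<Union>w\<in>nbrs E v. nbrs E w - {v})" using nv nw by blast
  have "card (\<Union>w\<in>nbrs E v. nbrs E w - {v}) \<le> (\<Sum>w\<in>nbrs E v. card (nbrs E w - {v}))"
    by (rule card_UN_le[OF nv(1)])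
  also have "\<dots> \<le> (\<Sum>w\<in>nbrs E v. ?d - 1)" by (rule sum_mono) (use nw in blast)
  also have "\<dots> = card (nbrs E v) * (?d - 1)" by simp
  also have "\<dots> \<le> ?d * (?d - 1)" using nv(2) by simp
  finally have cU: "card (\<Union>w\<in>nbrs E v. nbrs E w - {v}) \<le> ?d * (?d - 1)" .
  have fin: "finite {u. close2 E u v}" using sub nv finU finite_subset by blast
  have "card {u. close2 E u v} \<le> card (nbrs E v \<union> (\<Union>w\<in>nbrs E v. nbrs E w - {v}))"
    using sub nv finU by (intro card_mono) auto
  also have "\<dots> \<le> card (nbrs E v) + card (\<Union>w\<in>nbrs E v. nbrs E w - {v})" by (rule card_Un_le)
  also have "\<dots> \<le> ?d + ?d * (?d - 1)" using nv(2) cU by simp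
  also have "\<dots> = ?d^2" by (cases ?d) (auto simp: power2_eq_square)
  finally show ?thesis using fin by simp
qed

lemma arith_ap: "(a::nat) + c \<noteq> 2 * b \<Longrightarrow> a \<noteq> c \<Longrightarrow> \<bar>int b - int a\<bar> \<noteq> \<bar>int b - int c\<bar>"
  by linarith

lemma arith_dbl: "(a::nat) \<noteq> 2 * b \<Longrightarrow> b \<noteq> 2 * a \<Longrightarrow> 0 < a \<Longrightarrow> 0 < b \<Longrightarrow>
  \<bar>int a - int b\<bar> \<noteq> int a \<and> \<bar>int a - int b\<bar> \<noteq> int b"
  by linarith

lemma labeling_exists:
  fixes V :: "'a set" and E :: "'a \<Rightarrow> 'a \<Rightarrow> bool"
  assumes sg: "simple_graph V E" and cV: "countable V" and iV: "infinite V"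
    and fd: "finite_max_degree V E"
    and ws: "well_spaced_row S" and cS: "(max_degree V E)^2 + 1 \<le> card S"
  shows "\<exists>f. proper_total_diff_labeling V E (Max S) f"
proof -
  let ?e = "from_nat_into V"
  let ?i = "to_nat_on V"
  have bij: "bij_betw ?e UNIV V" using bij_betw_from_nat_into[OF cV iV] .
  have inje: "inj ?e" using bij by (simp add: bij_betw_def)
  have eV: "?e n \<in> V" for n using bij by (auto simp: bij_betw_def)
  have finS: "finite S" using ws unfolding well_spaced_row_def by blast
  define R where "R m n = close2 E (?e m) (?e n)" for m n
  have bound: "card {m. m < n \<and> R m n} \<le> (max_degree V E)^2" for n
  proof -
    have cc: "finite {u. close2 E u (?e n)}" "card {u. close2 E u (?e n)} \<le> (max_degree V E)^2"
      using close2_card[OF sg fd eV[of n]] by auto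
    have "card {m. m < n \<and> R m n} \<le> card {u. close2 E u (?e n)}"
      by (rule card_inj_on_le[where f = ?e]) (use inje cc in \<open>auto simp: R_def inj_on_def\<close>)
    then show ?thesis using cc by simp
  qed
  have lt: "(max_degree V E)^2 < card S" using cS by simp
  obtain g where g: "\<And>n. g n \<in> S" "\<And>n m. m < n \<Longrightarrow> R m n \<Longrightarrow> g m \<noteq> g n"
    using greedy[OF finS lt bound] by blast
  define f where "f v = g (?i v)" for v
  have fS: "f v \<in> S" for v unfolding f_def using g(1) by blast
  have key: "u \<in> V \<Longrightarrow> v \<in> V \<Longrightarrow> close2 E u v \<Longrightarrow> f u \<noteq> f v" for u v
  proof -
    assume u: "u \<in> V" and v: "v \<in> V" and c: "close2 E u v"
    have ne: "u \<noteq> v" using c unfolding close2_def by blast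
    have eu: "?e (?i u) = u" by (rule from_nat_into_to_nat_on[OF cV u])
    have ev: "?e (?i v) = v" by (rule from_nat_into_to_nat_on[OF cV v])
    have "?i u \<noteq> ?i v"
    proof
      assume "?i u = ?i v"
      then have "?e (?i u) = ?e (?i v)" by simp
      then show False using eu ev ne by simp
    qed
    then consider "?i u < ?i v" | "?i v < ?i u" by linarith
    then show ?thesis
    proof cases
      case 1
      have "R (?i u) (?i v)" unfolding R_def eu ev by (rule c)
      then show ?thesis using g(2)[OF 1] unfolding f_def by blast
    next
      case 2
      have "R (?i v) (?i u)" unfolding R_def eu ev by (rule close2_sym[OF sg c])
      then show ?thesis using g(2)[OF 2] unfolding f_def by metis
    qed
  qed
  have EV: "E u v \<Longrightarrow> u \<in> V \<and> v \<in> V \<and> u \<noteq> v \<and> E v u" for u v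
    using sg unfolding simple_graph_def by blast
  have pos: "x \<in> S \<Longrightarrow> 0 < x" for x using ws unfolding well_spaced_row_def by blast
  have dbl: "x \<in> S \<Longrightarrow> y \<in> S \<Longrightarrow> x \<noteq> 2 * y" for x y using ws unfolding well_spaced_row_def by blast
  have ap: "a \<in> S \<Longrightarrow> b \<in> S \<Longrightarrow> c \<in> S \<Longrightarrow> a \<noteq> b \<Longrightarrow> b \<noteq> c \<Longrightarrow> a \<noteq> c \<Longrightarrow> a + c \<noteq> 2 * b"
    for a b c using ws unfolding well_spaced_row_def by blast
  have p1: "\<forall>v\<in>V. f v \<in> {1..Max S}"
  proof
    fix v
    have "0 < f v" using pos fS by blast
    moreover have "f v \<le> Max S" using fS finS by (intro Max_ge)
    ultimately show "f v \<in> {1..Max S}" by simp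
  qed
  have p2': "E u v \<Longrightarrow> f u \<noteq> f v" for u v
  proof -
    assume a: "E u v"
    have "u \<in> V" "v \<in> V" "u \<noteq> v" using EV[OF a] by auto
    moreover have "close2 E u v" using a \<open>u \<noteq> v\<close> unfolding close2_def by blast
    ultimately show ?thesis using key by blast
  qed
  have p2: "\<forall>u v. E u v \<longrightarrow> f u \<noteq> f v" using p2' by blast
  have p3: "\<forall>v u w. E v u \<longrightarrow> E v w \<longrightarrow> u \<noteq> w \<longrightarrow> elab f v u \<noteq> elab f v w"
  proof (intro allI impI)
    fix v u w assume a: "E v u" "E v w" "u \<noteq> w"
    have d1: "f u \<noteq> f v" using p2'[OF a(1)] by simp
    have d1': "f v \<noteq> f w" using p2'[OF a(2)] .
    have eu: "E u v" using EV[OF a(1)] by blast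
    have "close2 E u w" using eu a(2) a(3) unfolding close2_def by blast
    moreover have "u \<in> V" "w \<in> V" using EV[OF a(1)] EV[OF a(2)] by auto
    ultimately have d2: "f u \<noteq> f w" using key by blast
    have "f u + f w \<noteq> 2 * f v" by (rule ap[OF fS fS fS d1 d1' d2])
    then show "elab f v u \<noteq> elab f v w" unfolding elab_def using d2 by (rule arith_ap)
  qed
  have p4: "\<forall>u v. E u v \<longrightarrow> elab f u v \<noteq> int (f u) \<and> elab f u v \<noteq> int (f v)"
  proof (intro allI impI)
    fix u v assume a: "E u v"
    show "elab f u v \<noteq> int (f u) \<and> elab f u v \<noteq> int (f v)"
      unfolding elab_def by (rule arith_dbl[OF dbl[OF fS fS] dbl[OF fS fS] pos[OF fS] pos[OF fS]])
  qed
  show ?thesis unfolding proper_total_diff_labeling_def using p1 p2 p3 p4 by blast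
qed

lemma pow3_ap:
  fixes a b c :: nat
  assumes "a \<noteq> b" "b \<noteq> c"
  shows "(3::nat)^a + 3^c \<noteq> 2 * 3^b"
proof (cases "b < a \<or> b < c")
  case True
  then obtain x where x: "x = a \<or> x = c" "b < x" by blast
  have "(3::nat)^(Suc b) \<le> 3^x" using x(2) by (intro power_increasing) simp_all
  then have h1: "3 * 3^b \<le> (3::nat)^x" by simp
  have h2: "(0::nat) < 3^b" by simp
  have "2 * 3^b < (3::nat)^x" using h1 h2 by linarith
  moreover have "(3::nat)^x \<le> 3^a + 3^c" using x(1) by (elim disjE) simp_all
  ultimately show ?thesis by linarith
next
  case False
  then have "a < b" "c < b" using assms by auto
  then obtain k where k: "b = Suc k" by (cases b) auto
  have "(3::nat)^a \<le> 3^k" using \<open>a < b\<close> k by (intro power_increasing) simp_all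
  moreover have "(3::nat)^c \<le> 3^k" using \<open>c < b\<close> k by (intro power_increasing) simp_all
  moreover have "(2::nat) * 3^b = 6 * 3^k" using k by simp
  moreover have "(0::nat) < 3^k" by simp
  ultimately show ?thesis by linarith
qed

lemma pow3_row: "well_spaced_row ((\<lambda>i. (3::nat)^i) ` {..<m}) \<and> card ((\<lambda>i. (3::nat)^i) ` {..<m}) = m"
proof -
  let ?T = "(\<lambda>i. (3::nat)^i) ` {..<m}"
  have inj: "inj (\<lambda>i. (3::nat)^i)" by (simp add: inj_def)
  have c: "card ?T = m"
    using card_image[OF inj_on_subset[OF inj, of "{..<m}"]] by simp
  have d: "(3::nat)^i \<noteq> 2 * 3^j" for i j
  proof
    assume "(3::nat)^i = 2 * 3^j"
    then have "even ((3::nat)^i)" by simp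
    then show False by simp
  qed
  have p1: "\<forall>x\<in>?T. 0 < x" by auto
  have p2: "\<forall>x\<in>?T. \<forall>y\<in>?T. x \<noteq> 2 * y"
  proof (intro ballI)
    fix x y assume "x \<in> ?T" "y \<in> ?T"
    then obtain i j where "x = 3^i" "y = 3^j" by blast
    then show "x \<noteq> 2 * y" using d[of i j] by simp
  qed
  have p3: "\<forall>a\<in>?T. \<forall>b\<in>?T. \<forall>c\<in>?T. a \<noteq> b \<and> b \<noteq> c \<and> a \<noteq> c \<longrightarrow> a + c \<noteq> 2 * b"
  proof (intro ballI impI)
    fix a b c assume "a \<in> ?T" "b \<in> ?T" "c \<in> ?T" and ne: "a \<noteq> b \<and> b \<noteq> c \<and> a \<noteq> c"
    then obtain i j l where "a = 3^i" "b = 3^j" "c = 3^l" by blast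
    moreover have "i \<noteq> j" "j \<noteq> l" using ne calculation by blast+
    ultimately show "a + c \<noteq> 2 * b" using pow3_ap by blast
  qed
  show ?thesis unfolding well_spaced_row_def using c p1 p2 p3 by blast
qed

theorem mainTheorem7:
  fixes V :: "'a set" and E :: "'a \<Rightarrow> 'a \<Rightarrow> bool"
  assumes "simple_graph V E"
    and "countable V" and "infinite V"
    and "finite_max_degree V E"
  shows "(\<exists>k::nat. 0 < k \<and> (\<exists>f. proper_total_diff_labeling V E k f)) \<and>
         (\<forall>S. minimal_well_spaced_row S ((max_degree V E)^2 + 1) \<longrightarrow> chi_td V E \<le> Max S)"
proof
  have mpos: "well_spaced_row S \<Longrightarrow> (max_degree V E)^2 + 1 \<le> card S \<Longrightarrow> 0 < Max S" for S
  proof -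
    assume ws: "well_spaced_row S" and c: "(max_degree V E)^2 + 1 \<le> card S"
    have fin: "finite S" using ws unfolding well_spaced_row_def by blast
    have ne: "S \<noteq> {}" using c by auto
    have "Max S \<in> S" using fin ne by simp
    then show ?thesis using ws unfolding well_spaced_row_def by blast
  qed
  let ?S = "(\<lambda>i. (3::nat)^i) ` {..<(max_degree V E)^2 + 1}"
  have "well_spaced_row ?S" "(max_degree V E)^2 + 1 \<le> card ?S" using pow3_row by auto
  then show "\<exists>k::nat. 0 < k \<and> (\<exists>f. proper_total_diff_labeling V E k f)"
    using labeling_exists[OF assms] mpos by blast
  show "\<forall>S. minimal_well_spaced_row S ((max_degree V E)^2 + 1) \<longrightarrow> chi_td V E \<le> Max S"
  proof (intro allI impI)
    fix S assume "minimal_well_spaced_row S ((max_degree V E)^2 + 1)"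
    then have ws: "well_spaced_row S" and c: "(max_degree V E)^2 + 1 \<le> card S"
      unfolding minimal_well_spaced_row_def by auto
    have "0 < Max S \<and> (\<exists>f. proper_total_diff_labeling V E (Max S) f)"
      using labeling_exists[OF assms ws c] mpos[OF ws c] by blast
    then show "chi_td V E \<le> Max S" unfolding chi_td_def by (rule Least_le)
  qed
qed

end
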